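(* Consider the problem $\min_{x\in\mathbb{R}^n} F(x):=f(x)+g(x)$ subject to $Ax=b$, under the setting described in the context, and let $\lambda^*$ be an optimal solution of $\max_{\lambda\in\mathbb{R}^m} d(\lambda)$. Let $\{x^k\}$ and $\{\lambda^k\}$ be generated by the IAL framework described in the context, with a nonnegative tolerance sequence $\{\eta_k\}$ satisfying $\sum_{k=1}^{+\infty}\eta_k<+\infty$. Then $$\delta_k:=d(\lambda^* )-d(\lambda^k)\to 0 \quad\text{and}\quad \|Ax^{k+1}-b\|\to 0 \quad (k\to\infty).$$
   Context: Let $A\in\mathbb{R}^{m\times n}$ and $b\in\mathbb{R}^m$. Let $f:\mathbb{R}^n\to\mathbb{R}$ be convex and differentiable with Lipschitz continuous gradient. Let $g:\mathbb{R}^n\to\mathbb{R}\cup\{+\infty\}$ be a closed proper convex (possibly nonsmooth) function with bounded domain. Fix a penalty parameter $\beta>0$. For $\lambda\in\mathbb{R}^m$, define $$\hat f_\beta(x;\lambda):=f(x)+\langle\lambda,Ax-b\rangle+\tfrac{\beta}{2}\|Ax-b\|^2,\qquad \mathcal{L}_\beta(x;\lambda):=\hat f_\beta(x;\lambda)+g(x),$$ and $d(\lambda):=\min_{x\in\mathbb{R}^n}\mathcal{L}_\beta(x;\lambda)$. Here $\nabla\hat f_\beta(x;\lambda)$ denotes the gradient of $\hat f_\beta$ with respect to $x$. IAL framework: choose $x^1\in\operatorname{dom} g$, $\lambda^1\in\mathbb{R}^m$, and a nonnegative sequence $\{\eta_k\}$. For $k=1,2,\dots$: find a point $x^{k+1}$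 such that $$\max_{x\in\mathbb{R}^n}\Big\{\langle\nabla\hat f_\beta(x^{k+1};\lambda^k),\,x^{k+1}-x\rangle+g(x^{k+1})-g(x)\Big\}\le\eta_k,$$ and then set $\lambda^{k+1}=\lambda^k+\beta(Ax^{k+1}-b)$. The result holds for any sequences produced in this way. *)

theory Defs
  imports "HOL-Analysis.Analysis"
begin

text \<open>The extended-valued g : R^n -> R \<union> {+\<infinity>} is represented by its (effective) domain D
  together with its finite values on D; g is +\<infinity> outside D.\<close>

definition closed_proper_convex :: "('a::real_normed_vector) set \<Rightarrow> ('a \<Rightarrow> real) \<Rightarrow> bool" where
  "closed_proper_convex D g \<longleftrightarrow> D \<noteq> {} \<and> convex D \<and> convex_on D g \<and>
     closed {(x, t). x \<in> D \<and> g x \<le> t}"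

definition fhat :: "(real^'n \<Rightarrow> real) \<Rightarrow> real^'n^'m \<Rightarrow> real^'m \<Rightarrow> real \<Rightarrow> real^'m \<Rightarrow> real^'n \<Rightarrow> real" where
  "fhat f A b \<beta> lam x = f x + lam \<bullet> (A *v x - b) + \<beta> / 2 * (norm (A *v x - b))\<^sup>2"

definition fhat_grad :: "(real^'n \<Rightarrow> real^'n) \<Rightarrow> real^'n^'m \<Rightarrow> real^'m \<Rightarrow> real \<Rightarrow> real^'m \<Rightarrow> real^'n \<Rightarrow> real^'n" where
  "fhat_grad Df A b \<beta> lam x = Df x + transpose A *v (lam + \<beta> *\<^sub>R (A *v x - b))"

definition aug_lag :: "(real^'n \<Rightarrow> real) \<Rightarrow> (real^'n \<Rightarrow> real) \<Rightarrow> real^'n^'m \<Rightarrow> real^'m \<Rightarrow> real \<Rightarrow> real^'m \<Rightarrow> real^'n \<Rightarrow> real" where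
  "aug_lag f g A b \<beta> lam x = fhat f A b \<beta> lam x + g x"

text \<open>d(lambda) = min over x of L_beta(x; lambda); since g = +\<infinity> off D, this is the infimum over D
  (the minimum is attained as D is compact and L_beta is lsc on it).\<close>
definition dual_fun :: "(real^'n \<Rightarrow> real) \<Rightarrow> (real^'n \<Rightarrow> real) \<Rightarrow> (real^'n) set \<Rightarrow> real^'n^'m \<Rightarrow> real^'m \<Rightarrow> real \<Rightarrow> real^'m \<Rightarrow> real" where
  "dual_fun f g D A b \<beta> lam = Inf (aug_lag f g A b \<beta> lam ` D)"

end

theory Submission
  imports Defs
begin


lemma tangent_ineq:
  fixes f :: "'a::real_inner \<Rightarrow> real"
  assumes cv: "convex_on UNIV f" and d: "(f has_derivative (\<lambda>h. Df \<bullet> h)) (at x)"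
  shows "f z \<ge> f x + Df \<bullet> (z - x)"
proof -
  define h where "h = z - x"
  define \<phi> where "\<phi> t = f (x + t *\<^sub>R h)" for t :: real
  have cphi: "convex_on UNIV \<phi>"
  proof (rule convex_onI)
    fix t u v :: real assume "t > 0" "t < 1"
    have "x + ((1 - t) * u + t * v) *\<^sub>R h = (1 - t) *\<^sub>R (x + u *\<^sub>R h) + t *\<^sub>R (x + v *\<^sub>R h)"
      by (simp add: algebra_simps)
    then show "\<phi> ((1 - t) *\<^sub>R u + t *\<^sub>R v) \<le> (1 - t) * \<phi> u + t * \<phi> v"
      unfolding \<phi>_def using convex_onD[OF cv, of t] \<open>t>0\<close> \<open>t<1\<close> by simp
  qed simp
  have d1: "((\<lambda>t. x + t *\<^sub>R h) has_derivative (\<lambda>t. t *\<^sub>R h)) (at 0)"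
    by (auto intro!: derivative_eq_intros)
  have d2: "(f has_derivative (\<lambda>h. Df \<bullet> h)) (at (x + 0 *\<^sub>R h))" using d by simp
  have "(\<phi> has_derivative (\<lambda>t. Df \<bullet> (t *\<^sub>R h))) (at 0)"
    unfolding \<phi>_def using has_derivative_compose[OF d1 d2] by (simp add: o_def)
  then have "(\<phi> has_derivative (*) (Df \<bullet> h)) (at 0)"
    by (rule has_derivative_eq_rhs) (auto simp: fun_eq_iff)
  then have "(\<phi> has_field_derivative (Df \<bullet> h)) (at 0 within UNIV)"
    by (simp add: has_field_derivative_def)
  from convex_on_imp_above_tangent[OF cphi _ _ _ this, of 1]
  have "\<phi> 1 - \<phi> 0 \<ge> Df \<bullet> h" by simp
  then show ?thesis by (simp add: \<phi>_def h_def)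
qed

lemma tr_inner:
  fixes A :: "real^'n^'m"
  shows "(transpose A *v u) \<bullet> v = u \<bullet> (A *v v)"
  by (simp add: dot_lmul_matrix)



lemma sq_bound:
  fixes m r :: "'a::real_inner"
  assumes "\<beta> > 0"
  shows "m \<bullet> r + \<beta> / 2 * (norm r)\<^sup>2 \<ge> - (norm m)\<^sup>2 / (2 * \<beta>)"
proof -
  have "0 \<le> (norm (\<beta> *\<^sub>R r + m))\<^sup>2" by simp
  also have "\<dots> = \<beta>\<^sup>2 * (norm r)\<^sup>2 + 2 * \<beta> * (m \<bullet> r) + (norm m)\<^sup>2"
    by (simp only: power2_norm_eq_inner inner_add_left inner_add_right inner_scaleR_left inner_scaleR_right inner_commute[of r m]) (simp add: algebra_simps power2_eq_square)
  also have "\<dots> = 2 * \<beta> * (m \<bullet> r + \<beta> / 2 * (norm r)\<^sup>2 + (norm m)\<^sup>2 / (2 * \<beta>))"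
    using assms by (simp add: distrib_left power2_eq_square)
  finally have "0 \<le> 2 * \<beta> * (m \<bullet> r + \<beta> / 2 * (norm r)\<^sup>2 + (norm m)\<^sup>2 / (2 * \<beta>))" .
  then have "0 \<le> m \<bullet> r + \<beta> / 2 * (norm r)\<^sup>2 + (norm m)\<^sup>2 / (2 * \<beta>)"
    using assms by (simp add: zero_le_mult_iff)
  then show ?thesis by simp
qed

lemma sq_bound2:
  fixes s r :: "'a::real_inner"
  assumes "\<beta> > 0"
  shows "- \<beta> * (r \<bullet> s) + \<beta> / 2 * (norm s)\<^sup>2 \<ge> - \<beta> / 2 * (norm r)\<^sup>2"
proof -
  have "0 \<le> \<beta> / 2 * (norm (s - r))\<^sup>2" using assms by simp
  also have "\<dots> = \<beta> / 2 * (norm s)\<^sup>2 - \<beta> * (r \<bullet> s) + \<beta> / 2 * (norm r)\<^sup>2"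
    by (simp only: power2_norm_eq_inner inner_diff_left inner_diff_right inner_commute[of s r]) (simp add: algebra_simps)
  finally show ?thesis by simp
qed

lemma dist_id:
  fixes ls l1 r :: "'a::real_inner"
  assumes "\<beta> > 0"
  shows "((norm (ls - (l1 - \<beta> *\<^sub>R r)))\<^sup>2 - (norm (ls - l1))\<^sup>2) / (2 * \<beta>)
     = (ls - l1) \<bullet> r + \<beta> / 2 * (norm r)\<^sup>2"
proof -
  have "(norm (ls - (l1 - \<beta> *\<^sub>R r)))\<^sup>2 = (norm ((ls - l1) + \<beta> *\<^sub>R r))\<^sup>2" by (simp add: algebra_simps)
  also have "\<dots> = (norm (ls - l1))\<^sup>2 + 2 * \<beta> * ((ls - l1) \<bullet> r) + \<beta>\<^sup>2 * (norm r)\<^sup>2"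
    by (simp only: power2_norm_eq_inner inner_add_left inner_add_right inner_scaleR_left inner_scaleR_right inner_commute[of r "ls - l1"]) (simp add: algebra_simps power2_eq_square)
  finally show ?thesis using assms by (simp add: field_simps power2_eq_square)
qed



theorem theorem1:
  fixes f :: "real^'n \<Rightarrow> real" and Df :: "real^'n \<Rightarrow> real^'n"
    and g :: "real^'n \<Rightarrow> real" and D :: "(real^'n) set"
    and A :: "real^'n^'m" and b :: "real^'m" and \<beta> :: real
    and x :: "nat \<Rightarrow> real^'n" and lam :: "nat \<Rightarrow> real^'m" and eta :: "nat \<Rightarrow> real"
    and lamstar :: "real^'m"
  assumes f_convex: "convex_on UNIV f"
    and f_grad: "\<And>z. (f has_derivative (\<lambda>h. Df z \<bullet> h)) (at z)"
    and f_lip: "\<exists>L. \<forall>y z. norm (Df y - Df z) \<le> L * norm (y - z)"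
    and g_cpc: "closed_proper_convex D g"
    and D_bdd: "bounded D"
    and beta_pos: "\<beta> > 0"
    and lamstar_opt: "\<And>l. dual_fun f g D A b \<beta> l \<le> dual_fun f g D A b \<beta> lamstar"
    and x1: "x 1 \<in> D"
    and eta_nonneg: "\<And>k. eta k \<ge> 0"
    and eta_sum: "summable eta"
    and x_step: "\<And>k. k \<ge> 1 \<Longrightarrow> x (Suc k) \<in> D \<and>
        (\<forall>z\<in>D. fhat_grad Df A b \<beta> (lam k) (x (Suc k)) \<bullet> (x (Suc k) - z)
                 + g (x (Suc k)) - g z \<le> eta k)"
    and lam_step: "\<And>k. k \<ge> 1 \<Longrightarrow> lam (Suc k) = lam k + \<beta> *\<^sub>R (A *v x (Suc k) - b)"
  shows "(\<lambda>k. dual_fun f g D A b \<beta> lamstar - dual_fun f g D A b \<beta> (lam k)) \<longlonglongrightarrow> 0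
       \<and> (\<lambda>k. norm (A *v x (Suc k) - b)) \<longlonglongrightarrow> 0"
  
proof -
  define ell where "ell z mu = f z + g z + mu \<bullet> (A *v z - b)" for z mu
  define r where "r k = A *v x (Suc k) - b" for k
  define d where "d mu = dual_fun f g D A b \<beta> mu" for mu
  have Leq: "aug_lag f g A b \<beta> mu z = ell z mu + \<beta> / 2 * (norm (A *v z - b))\<^sup>2" for mu z
    by (simp add: aug_lag_def fhat_def ell_def)
  have D_ne: "D \<noteq> {}" using x1 by auto
  have F1: "ell (x (Suc k)) (lam (Suc k)) \<le> ell z (lam (Suc k)) + eta k" if k: "k \<ge> 1" and z: "z \<in> D" for k z
  proof -
    let ?x = "x (Suc k)"
    from x_step[OF k] z have st: "fhat_grad Df A b \<beta> (lam k) ?x \<bullet> (?x - z) + g ?x - g z \<le> eta k" by blast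
    have "fhat_grad Df A b \<beta> (lam k) ?x = Df ?x + transpose A *v lam (Suc k)"
      by (simp add: fhat_grad_def lam_step[OF k])
    then have "fhat_grad Df A b \<beta> (lam k) ?x \<bullet> (?x - z) = Df ?x \<bullet> (?x - z) + lam (Suc k) \<bullet> (A *v ?x - A *v z)"
      by (simp add: inner_add_left tr_inner matrix_vector_mult_diff_distrib del: transpose_matrix_vector)
    moreover have "f z \<ge> f ?x + Df ?x \<bullet> (z - ?x)" by (rule tangent_ineq[OF f_convex f_grad])
    moreover have "Df ?x \<bullet> (z - ?x) = - (Df ?x \<bullet> (?x - z))" by (simp add: inner_diff_right)
    moreover have "lam (Suc k) \<bullet> (A *v ?x - A *v z) = lam (Suc k) \<bullet> (A *v ?x - b) - lam (Suc k) \<bullet> (A *v z - b)"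
      by (simp add: inner_diff_right)
    ultimately show ?thesis using st unfolding ell_def by linarith
  qed
  have F2: "ell (x 2) (lam 2) - eta 1 - (norm (mu - lam 2))\<^sup>2 / (2 * \<beta>) \<le> aug_lag f g A b \<beta> mu z"
    if z: "z \<in> D" for z mu
  proof -
    have "ell (x 2) (lam 2) - eta 1 \<le> ell z (lam 2)" using F1[of 1 z] z by (simp add: numeral_2_eq_2)
    moreover have "aug_lag f g A b \<beta> mu z = ell z (lam 2) + ((mu - lam 2) \<bullet> (A *v z - b) + \<beta> / 2 * (norm (A *v z - b))\<^sup>2)"
      by (simp add: Leq ell_def inner_diff_left)
    moreover note sq_bound[OF beta_pos, of "mu - lam 2" "A *v z - b"]
    ultimately show ?thesis by linarith
  qed
  have bdd: "bdd_below (aug_lag f g A b \<beta> mu ` D)" for mu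
    using F2 by (auto intro!: bdd_belowI2)
  have d_le: "d mu \<le> aug_lag f g A b \<beta> mu z" if "z \<in> D" for mu z
    unfolding d_def dual_fun_def using bdd that by (auto intro: cInf_lower)
  have d_ge: "c \<le> d mu" if "\<And>z. z \<in> D \<Longrightarrow> c \<le> aug_lag f g A b \<beta> mu z" for c mu
    unfolding d_def dual_fun_def using D_ne that by (auto intro: cInf_greatest)
  have lamS: "lam (Suc k) = lam k + \<beta> *\<^sub>R r k" if "k \<ge> 1" for k
    using lam_step[OF that] by (simp add: r_def)
  have F3: "ell (x (Suc k)) (lam (Suc k)) - eta k \<le> d (lam (Suc k))" if k: "k \<ge> 1" for k
  proof (rule d_ge)
    fix z assume z: "z \<in> D"
    show "ell (x (Suc k)) (lam (Suc k)) - eta k \<le> aug_lag f g A b \<beta> (lam (Suc k)) z"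
      using F1[OF k z] unfolding Leq by (smt (verit) zero_le_power2 beta_pos zero_le_divide_iff mult_nonneg_nonneg)
  qed
  have F4: "d (lam k) \<le> ell (x (Suc k)) (lam (Suc k)) - \<beta> / 2 * (norm (r k))\<^sup>2" if k: "k \<ge> 1" for k
  proof -
    have "x (Suc k) \<in> D" using x_step[OF k] by blast
    then have "d (lam k) \<le> ell (x (Suc k)) (lam k) + \<beta> / 2 * (norm (r k))\<^sup>2"
      using d_le Leq r_def by metis
    moreover have "ell (x (Suc k)) (lam (Suc k)) = ell (x (Suc k)) (lam k) + \<beta> * (norm (r k))\<^sup>2"
      unfolding lamS[OF k] ell_def r_def[symmetric] by (simp add: inner_add_left power2_norm_eq_inner)
    ultimately show ?thesis by simp
  qed
  have F5: "ell (x (Suc k)) (lam (Suc k)) - eta k - \<beta> / 2 * (norm (r k))\<^sup>2 \<le> d (lam k)" if k: "k \<ge> 1" for k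
  proof (rule d_ge)
    fix z assume z: "z \<in> D"
    have "aug_lag f g A b \<beta> (lam k) z = ell z (lam (Suc k)) + (- \<beta> * (r k \<bullet> (A *v z - b)) + \<beta> / 2 * (norm (A *v z - b))\<^sup>2)"
      unfolding Leq lamS[OF k] ell_def by (simp add: inner_add_left)
    moreover note sq_bound2[OF beta_pos, of "r k" "A *v z - b"] F1[OF k z]
    ultimately show "ell (x (Suc k)) (lam (Suc k)) - eta k - \<beta> / 2 * (norm (r k))\<^sup>2 \<le> aug_lag f g A b \<beta> (lam k) z"
      by linarith
  qed
  define Dd where "Dd k = (norm (lamstar - lam k))\<^sup>2" for k
  have F6: "d lamstar \<le> ell (x (Suc k)) (lam (Suc k)) + (Dd k - Dd (Suc k)) / (2 * \<beta>)" if k: "k \<ge> 1" for k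
  proof -
    have "x (Suc k) \<in> D" using x_step[OF k] by blast
    then have "d lamstar \<le> ell (x (Suc k)) lamstar + \<beta> / 2 * (norm (r k))\<^sup>2"
      using d_le Leq r_def by metis
    moreover have "ell (x (Suc k)) lamstar = ell (x (Suc k)) (lam (Suc k)) + (lamstar - lam (Suc k)) \<bullet> r k"
      unfolding ell_def r_def by (simp add: inner_diff_left)
    moreover have "lam k = lam (Suc k) - \<beta> *\<^sub>R r k" using lamS[OF k] by simp
    then have "(Dd k - Dd (Suc k)) / (2 * \<beta>) = (lamstar - lam (Suc k)) \<bullet> r k + \<beta> / 2 * (norm (r k))\<^sup>2"
      unfolding Dd_def using dist_id[OF beta_pos, of lamstar "lam (Suc k)" "r k"] by simp
    ultimately show ?thesis by linarith
  qed
  define a where "a n = (norm (r (Suc n)))\<^sup>2" for n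
  define T where "T = suminf (\<lambda>n. eta (Suc n))"
  have se: "summable (\<lambda>n. eta (Suc n))" using eta_sum by (simp add: summable_Suc_iff)
  have etaT: "(\<Sum>n<N. eta (Suc n)) \<le> T" for N
    unfolding T_def using se eta_nonneg by (intro sum_le_suminf) auto
  have A1: "\<beta> / 2 * a n \<le> d (lam (Suc (Suc n))) - d (lam (Suc n)) + eta (Suc n)" for n
    using F3[of "Suc n"] F4[of "Suc n"] unfolding a_def by simp
  have A2: "\<beta> / 2 * (\<Sum>n<N. a n) \<le> d (lam (Suc N)) - d (lam 1) + (\<Sum>n<N. eta (Suc n))" for N
  proof (induction N)
    case (Suc N) then show ?case using A1[of N] by (simp add: distrib_left)
  qed simp
  have a_nn: "0 \<le> a n" for n unfolding a_def by simp
  have a_sum: "summable a"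
  proof (rule summableI_nonneg_bounded[OF a_nn])
    fix N
    have "\<beta> / 2 * (\<Sum>n<N. a n) \<le> d lamstar - d (lam 1) + T"
      using A2[of N] etaT[of N] lamstar_opt[of "lam (Suc N)"] unfolding d_def by linarith
    then show "(\<Sum>n<N. a n) \<le> (d lamstar - d (lam 1) + T) / (\<beta> / 2)"
      using beta_pos by (simp add: pos_le_divide_eq mult.commute)
  qed
  have a0: "a \<longlonglongrightarrow> 0" using summable_LIMSEQ_zero[OF a_sum] .
  have "(\<lambda>n. sqrt (a n)) \<longlonglongrightarrow> sqrt 0" by (intro tendsto_real_sqrt a0)
  then have R0: "(\<lambda>n. norm (r (Suc n))) \<longlonglongrightarrow> 0" by (simp add: a_def)
  have R: "(\<lambda>k. norm (A *v x (Suc k) - b)) \<longlonglongrightarrow> 0"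
    apply (rule LIMSEQ_imp_Suc) using R0 by (simp add: r_def)
  define dl where "dl n = d lamstar - d (lam (Suc n))" for n
  have dnn: "0 \<le> dl n" for n unfolding dl_def d_def using lamstar_opt by simp
  have B1: "dl n \<le> (Dd (Suc n) - Dd (Suc (Suc n))) / (2 * \<beta>) + eta (Suc n) + \<beta> / 2 * a n" for n
    using F5[of "Suc n"] F6[of "Suc n"] unfolding dl_def a_def by simp
  have B2: "(\<Sum>n<N. dl n) \<le> (Dd 1 - Dd (Suc N)) / (2 * \<beta>) + (\<Sum>n<N. eta (Suc n)) + \<beta> / 2 * (\<Sum>n<N. a n)" for N
  proof (induction N)
    case (Suc N) then show ?case using B1[of N] by (simp add: distrib_left diff_divide_distrib)
  qed simp
  have d_sum: "summable dl"
  proof (rule summableI_nonneg_bounded[OF dnn])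
    fix N
    have "(\<Sum>n<N. a n) \<le> suminf a" using a_sum a_nn by (intro sum_le_suminf) auto
    then have "\<beta> / 2 * (\<Sum>n<N. a n) \<le> \<beta> / 2 * suminf a" using beta_pos by simp
    moreover have "0 \<le> Dd (Suc N) / (2 * \<beta>)" unfolding Dd_def using beta_pos by simp
    moreover have "(Dd 1 - Dd (Suc N)) / (2 * \<beta>) = Dd 1 / (2 * \<beta>) - Dd (Suc N) / (2 * \<beta>)"
      by (simp add: diff_divide_distrib)
    ultimately show "(\<Sum>n<N. dl n) \<le> Dd 1 / (2 * \<beta>) + T + \<beta> / 2 * suminf a"
      using B2[of N] etaT[of N] by linarith
  qed
  have "dl \<longlonglongrightarrow> 0" using summable_LIMSEQ_zero[OF d_sum] .
  then have "(\<lambda>k. d lamstar - d (lam k)) \<longlonglongrightarrow> 0"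
    apply - apply (rule LIMSEQ_imp_Suc) by (simp add: dl_def[abs_def])
  with R show ?thesis unfolding d_def by simp
qed

end
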